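(* For any state $\eta$ of $R$, any state $\tau$ of $A$ and any $p\in[0,1]$, with $\Lambda_p(\eta):=p\eta+(1-p)\mathbb{1}/d$ and $d=d_R$, $$\Phi_{\Lambda_p(\eta)}(\tau)=p\,\Phi_\eta(\tau)+(1-p)\,\Phi_{\mathbb{1}/d}(\tau)=p\,\Phi_\eta(\tau)+\frac{1-p}{d}.$$
   Context: $G$ is a compact group with normalized Haar measure $dg$; finite-dimensional systems $A,R$ carry continuous unitary representations $U_A,U_R$. On $RA$, $\mathcal{G}(M)=\int dg\,(U_R(g)\otimes U_A(g))M(U_R(g)\otimes U_A(g))^\dagger$. $\Phi_\eta(\tau):=\inf_{X\ge0}\{\mathrm{tr}[X]:\mathbb{1}_R\otimes X-\mathcal{G}(\eta\otimes\tau)\ge0\}$. *)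

theory Defs
  imports "HOL-Analysis.Analysis" "HOL-Algebra.Group"
begin

text \<open>Operators on a finite-dimensional Hilbert space with orthonormal basis indexed by a
finite type 'i are represented as complex matrices  'i => 'i => complex.\<close>

type_synonym 'i op = "'i \<Rightarrow> 'i \<Rightarrow> complex"

definition mmult :: "'i::finite op \<Rightarrow> 'i op \<Rightarrow> 'i op" where
  "mmult M N = (\<lambda>i k. \<Sum>j\<in>UNIV. M i j * N j k)"

definition adj :: "'i op \<Rightarrow> 'i op" where
  "adj M = (\<lambda>i j. cnj (M j i))"

definition idop :: "'i op" where
  "idop = (\<lambda>i j. if i = j then 1 else 0)"

definition tensor :: "'r op \<Rightarrow> 'a op \<Rightarrow> ('r \<times> 'a) op" where
  "tensor M N = (\<lambda>(i, a) (j, b). M i j * N a b)"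

definition trace :: "'i::finite op \<Rightarrow> complex" where
  "trace M = (\<Sum>i\<in>UNIV. M i i)"

definition psd :: "'i::finite op \<Rightarrow> bool" where
  "psd M = (\<forall>v :: 'i \<Rightarrow> complex.
      Im (\<Sum>i\<in>UNIV. \<Sum>j\<in>UNIV. cnj (v i) * M i j * v j) = 0 \<and>
      Re (\<Sum>i\<in>UNIV. \<Sum>j\<in>UNIV. cnj (v i) * M i j * v j) \<ge> 0)"

definition state :: "'i::finite op \<Rightarrow> bool" where
  "state M = (psd M \<and> trace M = 1)"

definition unitary_op :: "'i::finite op \<Rightarrow> bool" where
  "unitary_op U = (mmult U (adj U) = idop \<and> mmult (adj U) U = idop)"

definition compact_group_haar ::
  "('g, 'b) monoid_scheme \<Rightarrow> 'g topology \<Rightarrow> 'g measure \<Rightarrow> bool" where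
  "compact_group_haar G T \<mu> =
    (group G \<and> topspace T = carrier G \<and> compact_space T \<and> Hausdorff_space T \<and>
     continuous_map (prod_topology T T) T (\<lambda>(x, y). x \<otimes>\<^bsub>G\<^esub> y) \<and>
     continuous_map T T (\<lambda>x. inv\<^bsub>G\<^esub> x) \<and>
     emeasure \<mu> (space \<mu>) = 1 \<and> space \<mu> = carrier G \<and>
     sets \<mu> = sigma_sets (topspace T) {S. openin T S} \<and>
     (\<forall>g\<in>carrier G. \<forall>B\<in>sets \<mu>.
        emeasure \<mu> ((\<lambda>x. g \<otimes>\<^bsub>G\<^esub> x) ` B) = emeasure \<mu> B \<and>
        emeasure \<mu> ((\<lambda>x. x \<otimes>\<^bsub>G\<^esub> g) ` B) = emeasure \<mu> B) \<and>
     (\<forall>B\<in>sets \<mu>. emeasure \<mu> B = (INF U\<in>{U. openin T U \<and> B \<subseteq> U}. emeasure \<mu> U)) \<and>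
     (\<forall>U. openin T U \<longrightarrow>
        emeasure \<mu> U = (SUP K\<in>{K. compactin T K \<and> K \<subseteq> U}. emeasure \<mu> K)))"

definition unitary_rep ::
  "('g, 'b) monoid_scheme \<Rightarrow> 'g topology \<Rightarrow> ('g \<Rightarrow> 'i::finite op) \<Rightarrow> bool" where
  "unitary_rep G T U =
    ((\<forall>g\<in>carrier G. unitary_op (U g)) \<and>
     U \<one>\<^bsub>G\<^esub> = idop \<and>
     (\<forall>g\<in>carrier G. \<forall>h\<in>carrier G. U (g \<otimes>\<^bsub>G\<^esub> h) = mmult (U g) (U h)) \<and>
     (\<forall>i j. continuous_map T euclidean (\<lambda>g. U g i j)))"

definition twirl ::
  "'g measure \<Rightarrow> ('g \<Rightarrow> 'r::finite op) \<Rightarrow> ('g \<Rightarrow> 'a::finite op) \<Rightarrow> ('r \<times> 'a) op \<Rightarrow> ('r \<times> 'a) op" where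
  "twirl \<mu> UR UA M = (\<lambda>x y. integral\<^sup>L \<mu>
      (\<lambda>g. mmult (mmult (tensor (UR g) (UA g)) M) (adj (tensor (UR g) (UA g))) x y))"

text \<open>Phi_eta(tau) = inf { tr X : X \<ge> 0, 1_R \<otimes> X - G(eta \<otimes> tau) \<ge> 0 }.
  (tr X is real for X \<ge> 0; we take its real part.)\<close>
definition Phi ::
  "'g measure \<Rightarrow> ('g \<Rightarrow> 'r::finite op) \<Rightarrow> ('g \<Rightarrow> 'a::finite op) \<Rightarrow> 'r op \<Rightarrow> 'a op \<Rightarrow> real" where
  "Phi \<mu> UR UA \<eta> \<tau> = Inf {Re (trace X) | X :: 'a op. psd X \<and>
      psd (\<lambda>x y. tensor (idop :: 'r op) X x y - twirl \<mu> UR UA (tensor \<eta> \<tau>) x y)}"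

definition depol :: "real \<Rightarrow> 'r::finite op \<Rightarrow> 'r op" where
  "depol p \<eta> = (\<lambda>i j. complex_of_real p * \<eta> i j +
      complex_of_real ((1 - p) / real CARD('r)) * idop i j)"

definition maxmixed :: "'r::finite op" where
  "maxmixed = (\<lambda>i j. idop i j / complex_of_real (real CARD('r)))"

end

theory Submission
  imports Defs
begin
definition qf :: "'i::finite op \<Rightarrow> ('i \<Rightarrow> complex) \<Rightarrow> complex" where
  "qf M v = (\<Sum>i\<in>UNIV. \<Sum>j\<in>UNIV. cnj (v i) * M i j * v j)"
lemma psd_qf: "psd M \<longleftrightarrow> (\<forall>v. Im (qf M v) = 0 \<and> Re (qf M v) \<ge> 0)"
  by (simp add: psd_def qf_def)
lemma qf_add: "qf (\<lambda>x y. A x y + B x y) v = qf A v + qf B v"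
  by (simp add: qf_def algebra_simps sum.distrib)
lemma qf_diff: "qf (\<lambda>x y. A x y - B x y) v = qf A v - qf B v"
  by (simp add: qf_def algebra_simps sum_subtractf)
lemma qf_scale: "qf (\<lambda>x y. c * A x y) v = c * qf A v"
  by (simp add: qf_def algebra_simps sum_distrib_left)
lemma psd_add: "psd A \<Longrightarrow> psd B \<Longrightarrow> psd (\<lambda>x y. A x y + B x y)"
  by (simp add: psd_qf qf_add)
lemma psd_scale: "c \<ge> 0 \<Longrightarrow> psd A \<Longrightarrow> psd (\<lambda>x y. complex_of_real c * A x y)"
  by (simp add: psd_qf qf_scale)
definition ev :: "'i \<Rightarrow> 'i \<Rightarrow> complex" where "ev i = (\<lambda>k. if k = i then 1 else 0)"
lemma sum_ev_r: "(\<Sum>j\<in>UNIV. f j * ev i j) = f (i::'i::finite)"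
proof -
  have "(\<Sum>j\<in>UNIV. f j * ev i j) = (\<Sum>j\<in>UNIV. if j = i then f j else 0)"
    by (rule sum.cong) (auto simp: ev_def)
  then show ?thesis by simp
qed
lemma sum_ev_l: "(\<Sum>j\<in>UNIV. cnj (ev i j) * f j) = f (i::'i::finite)"
proof -
  have "(\<Sum>j\<in>UNIV. cnj (ev i j) * f j) = (\<Sum>j\<in>UNIV. if j = i then f j else 0)"
    by (rule sum.cong) (auto simp: ev_def)
  then show ?thesis by simp
qed
lemma idop_ev: "idop i = ev i"
  by (auto simp: idop_def ev_def)
lemma qf_idop: "qf idop v = (\<Sum>i\<in>UNIV. complex_of_real ((norm (v i))\<^sup>2))"
proof -
  have "\<And>i. (\<Sum>j\<in>UNIV. cnj (v i) * idop i j * v j) = (\<Sum>j\<in>UNIV. (cnj (v i) * v j) * ev i j)"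
    by (rule sum.cong) (auto simp: idop_ev mult_ac)
  moreover have "\<And>i. cnj (v i) * v i = complex_of_real ((norm (v i))\<^sup>2)"
    by (simp only: complex_norm_square mult.commute)
  ultimately show ?thesis unfolding qf_def by (simp only: sum_ev_r)
qed
lemma psd_idop: "psd (idop :: 'i::finite op)"
  unfolding psd_qf qf_idop by (simp add: sum_nonneg)

definition bil :: "'i::finite op \<Rightarrow> ('i \<Rightarrow> complex) \<Rightarrow> ('i \<Rightarrow> complex) \<Rightarrow> complex" where
  "bil M u w = (\<Sum>i\<in>UNIV. \<Sum>j\<in>UNIV. cnj (u i) * M i j * w j)"
lemma qf_bil: "qf M v = bil M v v" by (simp add: qf_def bil_def)
lemma bil_ev: "bil M (ev i) (ev j) = M i j"
  unfolding bil_def sum_ev_r sum_ev_l ..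
lemma qf_lin: "qf M (\<lambda>k. a k + z * b k) = bil M a a + z * bil M a b + cnj z * bil M b a + cnj z * z * bil M b b"
  by (simp add: qf_def bil_def algebra_simps sum.distrib sum_distrib_left)
lemma qf_polar: "qf M (\<lambda>k. ev i k + z * ev j k)
   = M i i + z * M i j + cnj z * M j i + cnj z * z * M j j"
  by (simp add: qf_lin bil_ev)
lemma qf_unit: "qf M (ev i) = M i i"
  by (simp add: qf_bil bil_ev)
lemma psd_herm: assumes "psd M" shows "M i j = cnj (M j i)"
proof -
  have q: "\<And>v. Im (qf M v) = 0" using assms by (simp add: psd_qf)
  have d: "Im (M k k) = 0" for k using q[of "ev k"] by (simp add: qf_unit)
  have 1: "Im (M i j) + Im (M j i) = 0"
    using q[of "\<lambda>k. ev i k + 1 * ev j k"] d[of i] d[of j]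
    unfolding qf_polar by simp
  have 2: "Re (M i j) - Re (M j i) = 0"
    using q[of "\<lambda>k. ev i k + \<i> * ev j k"] d[of i] d[of j]
    unfolding qf_polar by simp
  show ?thesis using 1 2 by (simp add: complex_eq_iff)
qed

lemma herm_qf_real: assumes "\<And>i j. M i j = cnj (M j i)" shows "Im (qf M v) = 0"
proof -
  have "cnj (qf M v) = (\<Sum>i\<in>UNIV. \<Sum>j\<in>UNIV. v i * M j i * cnj (v j))"
    unfolding qf_def by (simp add: assms[symmetric])
  also have "\<dots> = qf M v" unfolding qf_def
    by (subst sum.swap) (simp add: mult_ac)
  finally show ?thesis by (metis cnj.simps(2) add.inverse_unique add_0 neg_equal_zero)
qed

lemma psd_diag: "psd X \<Longrightarrow> Im (X i i) = 0 \<and> Re (X i i) \<ge> 0"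
  using qf_unit[of X i] by (metis psd_qf)

lemma psd_trace: "psd X \<Longrightarrow> Re (trace X) \<ge> 0"
  unfolding trace_def by (simp add: sum_nonneg psd_diag)

lemma sum_pairs: "(\<Sum>x\<in>(UNIV::('r::finite \<times> 'a::finite) set). f x) = (\<Sum>r\<in>UNIV. \<Sum>a\<in>UNIV. f (r, a))"
  by (simp add: UNIV_Times_UNIV[symmetric] sum.cartesian_product del: UNIV_Times_UNIV)

lemma qf_tensor: "qf (tensor A B) (\<lambda>(r, a). u r * w a) = qf A u * qf B w"
proof -
  have "qf (tensor A B) (\<lambda>(r, a). u r * w a) =
     (\<Sum>r\<in>UNIV. \<Sum>a\<in>UNIV. \<Sum>r'\<in>UNIV. \<Sum>b\<in>UNIV. (cnj (u r) * A r r' * u r') * (cnj (w a) * B a b * w b))"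
    unfolding qf_def sum_pairs tensor_def by (simp add: mult_ac)
  also have "\<dots> = qf A u * qf B w"
    by (simp only: qf_def sum_product)
  finally show ?thesis .
qed

lemma psd_tensor_rev: assumes "psd (tensor (idop :: 'r::finite op) (Y :: 'a::finite op))" shows "psd Y"
  unfolding psd_qf
proof
  fix w
  define r0 :: 'r where "r0 = undefined"
  have "qf (tensor (idop :: 'r op) Y) (\<lambda>(r, a). ev r0 r * w a) = qf Y w"
    by (simp add: qf_tensor qf_unit idop_ev) (simp add: ev_def)
  then show "Im (qf Y w) = 0 \<and> 0 \<le> Re (qf Y w)" using assms unfolding psd_qf by metis
qed

lemma prod_half: "(a::real) * b \<le> (a\<^sup>2 + b\<^sup>2) / 2"
proof -
  have "0 \<le> (a - b)\<^sup>2" by simp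
  then show ?thesis by (simp add: power2_diff)
qed
lemma sum_sym: fixes x :: "'i::finite \<Rightarrow> real" shows "(\<Sum>i\<in>UNIV. \<Sum>j\<in>UNIV. B * (x i + x j) / 2) = B * real CARD('i::finite) * (\<Sum>i\<in>UNIV. x i)"
proof -
  have "(\<Sum>i\<in>UNIV. \<Sum>j\<in>UNIV. B * (x i + x j) / 2) = (\<Sum>i\<in>UNIV. \<Sum>j\<in>UNIV. B / 2 * x i + B / 2 * x (j::'i))"
    by (simp add: algebra_simps add_divide_distrib)
  also have "\<dots> = (\<Sum>i\<in>UNIV. real CARD('i) * (B / 2 * x i)) + real CARD('i) * (\<Sum>j\<in>UNIV. B / 2 * x j)"
    by (simp add: sum.distrib)
  also have "\<dots> = real CARD('i) * (B / 2) * (\<Sum>i\<in>UNIV. x i) + real CARD('i) * ((B / 2) * (\<Sum>i\<in>UNIV. x i))"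
    by (simp only: sum_distrib_left[symmetric] mult.assoc)
  also have "\<dots> = B * real CARD('i) * (\<Sum>i\<in>UNIV. x i)"
    by (simp add: algebra_simps)
  finally show ?thesis .
qed
lemma psd_shift:
  fixes N :: "'i::finite op"
  assumes im: "\<And>v. Im (qf N v) = 0" and bd: "\<And>i j. norm (N i j) \<le> B"
  shows "psd (\<lambda>i j. complex_of_real (B * CARD('i)) * idop i j - N i j)"
  unfolding psd_qf
proof
  fix v
  have B0: "0 \<le> B" using bd[of undefined undefined] norm_ge_zero order_trans by blast
  have e: "qf (\<lambda>i j. complex_of_real (B * CARD('i)) * idop i j - N i j) v
     = complex_of_real (B * CARD('i)) * (\<Sum>i\<in>UNIV. complex_of_real ((norm (v i))\<^sup>2)) - qf N v"
    by (simp add: qf_diff qf_scale qf_idop)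
  have "Re (qf N v) \<le> norm (qf N v)" by (rule complex_Re_le_cmod)
  also have "\<dots> \<le> (\<Sum>i\<in>UNIV. \<Sum>j\<in>UNIV. norm (cnj (v i) * N i j * v j))"
    unfolding qf_def by (rule order_trans[OF norm_sum sum_mono[OF norm_sum]])
  also have "\<dots> \<le> (\<Sum>i\<in>UNIV. \<Sum>j\<in>UNIV. B * ((norm (v i))\<^sup>2 + (norm (v j))\<^sup>2) / 2)"
  proof (intro sum_mono)
    fix i j
    have "norm (cnj (v i) * N i j * v j) = norm (N i j) * (norm (v i) * norm (v j))"
      by (simp add: norm_mult)
    also have "\<dots> \<le> B * (norm (v i) * norm (v j))"
      by (intro mult_right_mono bd) simp
    also have "\<dots> \<le> B * (((norm (v i))\<^sup>2 + (norm (v j))\<^sup>2) / 2)"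
      by (intro mult_left_mono B0) (rule prod_half)
    finally show "norm (cnj (v i) * N i j * v j) \<le> B * ((norm (v i))\<^sup>2 + (norm (v j))\<^sup>2) / 2" by simp
  qed
  also have "\<dots> = B * CARD('i) * (\<Sum>i\<in>UNIV. (norm (v i))\<^sup>2)"
    by (rule sum_sym)
  finally have "Re (qf N v) \<le> B * CARD('i) * (\<Sum>i\<in>UNIV. (norm (v i))\<^sup>2)" .
  then show "Im (qf (\<lambda>i j. complex_of_real (B * CARD('i)) * idop i j - N i j) v) = 0 \<and>
        0 \<le> Re (qf (\<lambda>i j. complex_of_real (B * CARD('i)) * idop i j - N i j) v)"
    unfolding e using im[of v] by (simp add: Re_sum Im_sum)
qed


definition tw :: "'g measure \<Rightarrow> ('g \<Rightarrow> 'i::finite op) \<Rightarrow> 'i op \<Rightarrow> 'i op" where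
  "tw \<mu> W M = (\<lambda>x y. integral\<^sup>L \<mu> (\<lambda>g. mmult (mmult (W g) M) (adj (W g)) x y))"

lemma twirl_tw: "twirl \<mu> UR UA M = tw \<mu> (\<lambda>g. tensor (UR g) (UA g)) M"
  by (simp add: twirl_def tw_def)

lemma mmult_expand: "mmult (mmult W M) (adj W) x y = (\<Sum>k\<in>UNIV. \<Sum>l\<in>UNIV. W x k * M k l * cnj (W y l))"
  unfolding mmult_def adj_def by (simp add: sum_distrib_right) (rule sum.swap)

definition goodW :: "'g measure \<Rightarrow> ('g \<Rightarrow> 'i::finite op) \<Rightarrow> bool" where
  "goodW \<mu> W \<longleftrightarrow> finite_measure \<mu> \<and> measure \<mu> (space \<mu>) = 1 \<and>
     (\<forall>i j. (\<lambda>g. W g i j) \<in> borel_measurable \<mu>) \<and> (\<forall>g\<in>space \<mu>. \<forall>i j. norm (W g i j) \<le> 1)"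

lemma meas_cnj: "f \<in> borel_measurable M \<Longrightarrow> (\<lambda>x. cnj (f x :: complex)) \<in> borel_measurable M"
  by (rule borel_measurable_continuous_on[OF continuous_on_cnj[OF continuous_on_id]])

lemma abc_le: "0 \<le> a \<Longrightarrow> a \<le> 1 \<Longrightarrow> 0 \<le> b \<Longrightarrow> 0 \<le> c \<Longrightarrow> c \<le> 1 \<Longrightarrow> a * b * c \<le> (b::real)"
proof -
  assume h: "0 \<le> a" "a \<le> 1" "0 \<le> b" "0 \<le> c" "c \<le> 1"
  have "a * b \<le> b" using h by (intro mult_left_le_one_le)
  moreover have "a * b * c \<le> a * b" using h by (intro mult_right_le_one_le) auto
  ultimately show ?thesis by linarith
qed

lemma goodW_int2:
  assumes "goodW \<mu> W" shows "integrable \<mu> (\<lambda>g. W g a b * cnj (W g c d))"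
proof -
  interpret finite_measure \<mu> using assms by (simp add: goodW_def)
  show ?thesis
  proof (rule integrable_const_bound[where B=1])
    show "AE x in \<mu>. norm (W x a b * cnj (W x c d)) \<le> 1"
      using assms unfolding goodW_def
      by (intro AE_I2) (auto simp: norm_mult intro!: mult_le_one)
    show "(\<lambda>g. W g a b * cnj (W g c d)) \<in> borel_measurable \<mu>"
      using assms unfolding goodW_def by (intro borel_measurable_times meas_cnj) auto
  qed
qed

lemma integrand_eq: "(\<lambda>g. mmult (mmult (W g) M) (adj (W g)) x y) = (\<lambda>g. \<Sum>k\<in>UNIV. \<Sum>l\<in>UNIV. M k l * (W g x k * cnj (W g y l)))"
  by (simp add: mmult_expand mult_ac)

lemma goodW_intF:
  assumes "goodW \<mu> W" shows "integrable \<mu> (\<lambda>g. mmult (mmult (W g) M) (adj (W g)) x y)"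
  unfolding integrand_eq by (auto intro!: integrable_sum integrable_mult_right goodW_int2[OF assms])

lemma sum4_swap:
  "(\<Sum>k\<in>A. \<Sum>l\<in>B. \<Sum>i\<in>C. \<Sum>j\<in>D. f k l i j) = (\<Sum>i\<in>C. \<Sum>j\<in>D. \<Sum>k\<in>A. \<Sum>l\<in>B. f k l i j)"
proof -
  have "(\<Sum>k\<in>A. \<Sum>l\<in>B. \<Sum>i\<in>C. \<Sum>j\<in>D. f k l i j) = (\<Sum>k\<in>A. \<Sum>i\<in>C. \<Sum>l\<in>B. \<Sum>j\<in>D. f k l i j)"
    by (rule sum.cong[OF refl], rule sum.swap)
  also have "\<dots> = (\<Sum>i\<in>C. \<Sum>k\<in>A. \<Sum>l\<in>B. \<Sum>j\<in>D. f k l i j)"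
    by (rule sum.swap)
  also have "\<dots> = (\<Sum>i\<in>C. \<Sum>k\<in>A. \<Sum>j\<in>D. \<Sum>l\<in>B. f k l i j)"
    by (rule sum.cong[OF refl], rule sum.cong[OF refl], rule sum.swap)
  also have "\<dots> = (\<Sum>i\<in>C. \<Sum>j\<in>D. \<Sum>k\<in>A. \<Sum>l\<in>B. f k l i j)"
    by (rule sum.cong[OF refl], rule sum.swap)
  finally show ?thesis .
qed

lemma qf_conj:
  "(\<Sum>i\<in>UNIV. \<Sum>j\<in>UNIV. cnj (v i) * mmult (mmult W M) (adj W) i j * v j) = qf M (\<lambda>k. \<Sum>i\<in>UNIV. cnj (W i k) * v i)"
proof -
  have "(\<Sum>i\<in>UNIV. \<Sum>j\<in>UNIV. cnj (v i) * mmult (mmult W M) (adj W) i j * v j)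
     = (\<Sum>i\<in>UNIV. \<Sum>j\<in>UNIV. \<Sum>k\<in>UNIV. \<Sum>l\<in>UNIV. (W i k * cnj (v i)) * M k l * (cnj (W j l) * v j))"
    by (simp add: mmult_expand sum_distrib_left sum_distrib_right mult_ac)
  also have "\<dots> = (\<Sum>k\<in>UNIV. \<Sum>l\<in>UNIV. \<Sum>i\<in>UNIV. \<Sum>j\<in>UNIV. (W i k * cnj (v i)) * M k l * (cnj (W j l) * v j))"
    by (rule sum4_swap[symmetric])
  also have "\<dots> = (\<Sum>k\<in>UNIV. \<Sum>l\<in>UNIV. \<Sum>j\<in>UNIV. \<Sum>i\<in>UNIV. (W i k * cnj (v i)) * M k l * (cnj (W j l) * v j))"
    by (rule sum.cong[OF refl], rule sum.cong[OF refl], rule sum.swap)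
  also have "\<dots> = qf M (\<lambda>k. \<Sum>i\<in>UNIV. cnj (W i k) * v i)"
    unfolding qf_def by (simp add: sum_distrib_left sum_distrib_right)
  finally show ?thesis .
qed

lemma qf_tw:
  assumes "goodW \<mu> W"
  shows "qf (tw \<mu> W M) v = integral\<^sup>L \<mu> (\<lambda>g. qf M (\<lambda>k. \<Sum>i\<in>UNIV. cnj (W g i k) * v i))"
    and "integrable \<mu> (\<lambda>g. qf M (\<lambda>k. \<Sum>i\<in>UNIV. cnj (W g i k) * v i))"
proof -
  note I = goodW_intF[OF assms]
  have I2: "integrable \<mu> (\<lambda>g. cnj (v i) * mmult (mmult (W g) M) (adj (W g)) i j * v j)" for i j
    using I by (intro integrable_mult_left integrable_mult_right) auto
  have "qf (tw \<mu> W M) v = (\<Sum>i\<in>UNIV. \<Sum>j\<in>UNIV. integral\<^sup>L \<mu> (\<lambda>g. cnj (v i) * mmult (mmult (W g) M) (adj (W g)) i j * v j))"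
    unfolding qf_def tw_def using I by simp
  also have "\<dots> = integral\<^sup>L \<mu> (\<lambda>g. \<Sum>i\<in>UNIV. \<Sum>j\<in>UNIV. cnj (v i) * mmult (mmult (W g) M) (adj (W g)) i j * v j)"
  proof -
    have s1: "(\<Sum>j\<in>UNIV. integral\<^sup>L \<mu> (\<lambda>g. cnj (v i) * mmult (mmult (W g) M) (adj (W g)) i j * v j))
       = integral\<^sup>L \<mu> (\<lambda>g. \<Sum>j\<in>UNIV. cnj (v i) * mmult (mmult (W g) M) (adj (W g)) i j * v j)" for i
      by (rule Bochner_Integration.integral_sum[symmetric]) (rule I2)
    have s2: "(\<Sum>i\<in>UNIV. integral\<^sup>L \<mu> (\<lambda>g. \<Sum>j\<in>UNIV. cnj (v i) * mmult (mmult (W g) M) (adj (W g)) i j * v j))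
       = integral\<^sup>L \<mu> (\<lambda>g. \<Sum>i\<in>UNIV. \<Sum>j\<in>UNIV. cnj (v i) * mmult (mmult (W g) M) (adj (W g)) i j * v j)"
      by (rule Bochner_Integration.integral_sum[symmetric]) (intro Bochner_Integration.integrable_sum I2)
    show ?thesis by (simp only: s1 s2)
  qed
  also have "\<dots> = integral\<^sup>L \<mu> (\<lambda>g. qf M (\<lambda>k. \<Sum>i\<in>UNIV. cnj (W g i k) * v i))"
    by (simp only: qf_conj)
  finally show "qf (tw \<mu> W M) v = integral\<^sup>L \<mu> (\<lambda>g. qf M (\<lambda>k. \<Sum>i\<in>UNIV. cnj (W g i k) * v i))" .
  have "integrable \<mu> (\<lambda>g. \<Sum>i\<in>UNIV. \<Sum>j\<in>UNIV. cnj (v i) * mmult (mmult (W g) M) (adj (W g)) i j * v j)"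
    by (intro Bochner_Integration.integrable_sum I2)
  then show "integrable \<mu> (\<lambda>g. qf M (\<lambda>k. \<Sum>i\<in>UNIV. cnj (W g i k) * v i))"
    by (simp only: qf_conj)
qed

lemma int_real_nonneg:
  fixes h :: "'g \<Rightarrow> complex"
  assumes "integrable \<mu> h" "\<And>g. g \<in> space \<mu> \<Longrightarrow> Im (h g) = 0"
  shows "Im (integral\<^sup>L \<mu> h) = 0"
    and "(\<And>g. g \<in> space \<mu> \<Longrightarrow> Re (h g) \<ge> 0) \<Longrightarrow> Re (integral\<^sup>L \<mu> h) \<ge> 0"
proof -
  have "Im (integral\<^sup>L \<mu> h) = integral\<^sup>L \<mu> (\<lambda>g. Im (h g))"
    by (rule integral_bounded_linear[OF bounded_linear_Im assms(1), symmetric])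
  also have "\<dots> = integral\<^sup>L \<mu> (\<lambda>g. 0)"
    by (rule Bochner_Integration.integral_cong) (auto simp: assms(2))
  finally show "Im (integral\<^sup>L \<mu> h) = 0" by simp
  assume r: "\<And>g. g \<in> space \<mu> \<Longrightarrow> Re (h g) \<ge> 0"
  have "Re (integral\<^sup>L \<mu> h) = integral\<^sup>L \<mu> (\<lambda>g. Re (h g))"
    by (rule integral_bounded_linear[OF bounded_linear_Re assms(1), symmetric])
  also have "\<dots> \<ge> 0" by (intro integral_nonneg_AE AE_I2 r)
  finally show "Re (integral\<^sup>L \<mu> h) \<ge> 0" .
qed

lemma psd_tw: assumes "goodW \<mu> W" "psd M" shows "psd (tw \<mu> W M)"
  unfolding psd_qf
proof
  fix v
  have p: "Im (qf M u) = 0" "Re (qf M u) \<ge> 0" for u using assms(2) by (auto simp: psd_qf)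
  show "Im (qf (tw \<mu> W M) v) = 0 \<and> 0 \<le> Re (qf (tw \<mu> W M) v)"
    unfolding qf_tw(1)[OF assms(1)] using int_real_nonneg[OF qf_tw(2)[OF assms(1)]] p by blast
qed

lemma tw_bound:
  assumes "goodW \<mu> W" shows "norm (tw \<mu> W M x y) \<le> (\<Sum>k\<in>UNIV. \<Sum>l\<in>UNIV. norm (M k l))"
proof -
  interpret finite_measure \<mu> using assms by (simp add: goodW_def)
  let ?B = "\<Sum>k\<in>UNIV. \<Sum>l\<in>UNIV. norm (M k l)"
  have pt: "norm (mmult (mmult (W g) M) (adj (W g)) x y) \<le> ?B" if g: "g \<in> space \<mu>" for g
  proof -
    have "norm (mmult (mmult (W g) M) (adj (W g)) x y) \<le> (\<Sum>k\<in>UNIV. \<Sum>l\<in>UNIV. norm (W g x k * M k l * cnj (W g y l)))"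
      unfolding mmult_expand by (rule order_trans[OF norm_sum sum_mono[OF norm_sum]])
    also have "\<dots> \<le> ?B"
      using assms g unfolding goodW_def
      by (intro sum_mono) (simp add: norm_mult abc_le)
    finally show ?thesis .
  qed
  have "norm (tw \<mu> W M x y) \<le> integral\<^sup>L \<mu> (\<lambda>g. norm (mmult (mmult (W g) M) (adj (W g)) x y))"
    unfolding tw_def by (rule integral_norm_bound)
  also have "\<dots> \<le> integral\<^sup>L \<mu> (\<lambda>g. ?B)"
    using goodW_intF[OF assms] pt by (intro integral_mono) auto
  also have "\<dots> = ?B" using assms by (simp add: goodW_def)
  finally show ?thesis .
qed

lemma trace_conj:
  assumes "mmult (adj W) W = idop"
  shows "(\<Sum>i\<in>UNIV. mmult (mmult W M) (adj W) i i) = (\<Sum>i\<in>UNIV. M i i)"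
proof -
  have u: "(\<Sum>i\<in>UNIV. cnj (W i l) * W i k) = idop l k" for l k
    using fun_cong[OF fun_cong[OF assms, of l], of k] by (simp add: mmult_def adj_def)
  have "(\<Sum>i\<in>UNIV. mmult (mmult W M) (adj W) i i) = (\<Sum>i\<in>UNIV. \<Sum>k\<in>UNIV. \<Sum>l\<in>UNIV. W i k * M k l * cnj (W i l))"
    by (simp add: mmult_expand)
  also have "\<dots> = (\<Sum>k\<in>UNIV. \<Sum>i\<in>UNIV. \<Sum>l\<in>UNIV. W i k * M k l * cnj (W i l))"
    by (rule sum.swap)
  also have "\<dots> = (\<Sum>k\<in>UNIV. \<Sum>l\<in>UNIV. \<Sum>i\<in>UNIV. W i k * M k l * cnj (W i l))"
    by (rule sum.cong[OF refl], rule sum.swap)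
  also have "\<dots> = (\<Sum>k\<in>UNIV. \<Sum>l\<in>UNIV. M k l * ev k l)"
  proof (intro sum.cong refl)
    fix k l
    have "(\<Sum>i\<in>UNIV. W i k * M k l * cnj (W i l)) = M k l * (\<Sum>i\<in>UNIV. cnj (W i l) * W i k)"
      by (simp add: sum_distrib_left mult_ac)
    also have "\<dots> = M k l * ev k l" by (simp add: u idop_def ev_def)
    finally show "(\<Sum>i\<in>UNIV. W i k * M k l * cnj (W i l)) = M k l * ev k l" .
  qed
  also have "\<dots> = (\<Sum>i\<in>UNIV. M i i)" by (simp only: sum_ev_r)
  finally show ?thesis .
qed

lemma trace_tw:
  assumes "goodW \<mu> W" "\<And>g. g \<in> space \<mu> \<Longrightarrow> mmult (adj (W g)) (W g) = idop"
  shows "trace (tw \<mu> W M) = trace M"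
proof -
  have "trace (tw \<mu> W M) = integral\<^sup>L \<mu> (\<lambda>g. \<Sum>i\<in>UNIV. mmult (mmult (W g) M) (adj (W g)) i i)"
    unfolding trace_def tw_def by (subst Bochner_Integration.integral_sum) (auto intro: goodW_intF[OF assms(1)])
  also have "\<dots> = integral\<^sup>L \<mu> (\<lambda>g. trace M)"
    by (rule Bochner_Integration.integral_cong) (auto simp: trace_def trace_conj assms(2))
  also have "\<dots> = trace M" using assms(1) by (simp add: goodW_def)
  finally show ?thesis .
qed

lemma mmult_tensor: "mmult (tensor A B) (tensor C D) = tensor (mmult A C) (mmult B D)"
  by (auto simp: fun_eq_iff mmult_def tensor_def sum_pairs sum_product mult_ac)

lemma adj_tensor: "adj (tensor A B) = tensor (adj A) (adj B)"
  by (auto simp: fun_eq_iff adj_def tensor_def)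

lemma mmult_idop: "mmult A idop = (A :: 'i::finite op)"
proof -
  have "mmult A idop i k = A i k" for i k
  proof -
    have "mmult A idop i k = (\<Sum>j\<in>UNIV. A i j * ev k j)"
      unfolding mmult_def by (rule sum.cong) (auto simp: idop_def ev_def)
    then show ?thesis by (simp only: sum_ev_r)
  qed
  then show ?thesis by auto
qed

lemma tw_tensor_idop:
  assumes "\<And>g. g \<in> space \<mu> \<Longrightarrow> mmult (UR g) (adj (UR g)) = idop"
  shows "tw \<mu> (\<lambda>g. tensor (UR g) (UA g)) (tensor (idop :: 'r::finite op) (\<tau> :: 'a::finite op))
     = tensor idop (tw \<mu> UA \<tau>)"
proof (intro ext)
  fix x y :: "'r \<times> 'a"
  obtain r a r' b where xy: "x = (r, a)" "y = (r', b)" by (cases x, cases y) auto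
  have pt: "mmult (mmult (tensor (UR g) (UA g)) (tensor idop \<tau>)) (adj (tensor (UR g) (UA g))) x y
      = idop r r' * mmult (mmult (UA g) \<tau>) (adj (UA g)) a b" if "g \<in> space \<mu>" for g
  proof -
    have "mmult (mmult (tensor (UR g) (UA g)) (tensor idop \<tau>)) (adj (tensor (UR g) (UA g)))
       = tensor (mmult (mmult (UR g) idop) (adj (UR g))) (mmult (mmult (UA g) \<tau>) (adj (UA g)))"
      by (simp only: mmult_tensor adj_tensor)
    also have "\<dots> = tensor idop (mmult (mmult (UA g) \<tau>) (adj (UA g)))"
      by (simp only: mmult_idop assms[OF that])
    finally show ?thesis by (simp add: xy tensor_def)
  qed
  have "tw \<mu> (\<lambda>g. tensor (UR g) (UA g)) (tensor idop \<tau>) x y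
     = integral\<^sup>L \<mu> (\<lambda>g. idop r r' * mmult (mmult (UA g) \<tau>) (adj (UA g)) a b)"
    unfolding tw_def by (rule Bochner_Integration.integral_cong) (auto simp: pt)
  also have "\<dots> = idop r r' * tw \<mu> UA \<tau> a b"
    unfolding tw_def by (cases "r = r'") (auto simp: idop_def)
  finally show "tw \<mu> (\<lambda>g. tensor (UR g) (UA g)) (tensor idop \<tau>) x y = tensor idop (tw \<mu> UA \<tau>) x y"
    by (simp add: xy tensor_def)
qed

lemma tw_lin:
  assumes "goodW \<mu> W"
  shows "tw \<mu> W (\<lambda>x y. a * M1 x y + b * M2 x y) = (\<lambda>x y. a * tw \<mu> W M1 x y + b * tw \<mu> W M2 x y)"
proof (intro ext)
  fix x y
  have e: "mmult (mmult (W g) (\<lambda>x y. a * M1 x y + b * M2 x y)) (adj (W g)) x y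
     = a * mmult (mmult (W g) M1) (adj (W g)) x y + b * mmult (mmult (W g) M2) (adj (W g)) x y" for g
    by (simp add: mmult_expand algebra_simps sum.distrib sum_distrib_left)
  show "tw \<mu> W (\<lambda>x y. a * M1 x y + b * M2 x y) x y = a * tw \<mu> W M1 x y + b * tw \<mu> W M2 x y"
    unfolding tw_def e using goodW_intF[OF assms] by simp
qed



lemma cont_meas:
  assumes "space \<mu> = topspace T" "sets \<mu> = sigma_sets (topspace T) {S. openin T S}"
    and "continuous_map T euclidean f"
  shows "f \<in> borel_measurable \<mu>"
proof (rule borel_measurableI)
  fix S :: "'b set" assume "open S"
  have "openin T {x \<in> topspace T. f x \<in> S}"
    by (rule openin_continuous_map_preimage[OF assms(3)]) (simp add: \<open>open S\<close>)
  then have "{x \<in> topspace T. f x \<in> S} \<in> sets \<mu>" unfolding assms(2) by (auto intro: sigma_sets.Basic)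
  moreover have "f -` S \<inter> space \<mu> = {x \<in> topspace T. f x \<in> S}" using assms(1) by auto
  ultimately show "f -` S \<inter> space \<mu> \<in> sets \<mu>" by simp
qed

lemma unitary_bound: assumes "unitary_op U" shows "norm (U i j) \<le> 1"
proof -
  have "mmult (adj U) U j j = idop j j" using assms by (simp add: unitary_op_def)
  then have "(\<Sum>k\<in>UNIV. cnj (U k j) * U k j) = 1" by (simp add: mmult_def adj_def idop_def)
  moreover have "\<And>k. cnj (U k j) * U k j = complex_of_real ((norm (U k j))\<^sup>2)"
    by (simp only: complex_norm_square mult.commute)
  ultimately have "complex_of_real (\<Sum>k\<in>UNIV. (norm (U k j))\<^sup>2) = 1" by simp
  then have s: "(\<Sum>k\<in>UNIV. (norm (U k j))\<^sup>2) = 1" using of_real_eq_1_iff by blast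
  have "(norm (U i j))\<^sup>2 \<le> (\<Sum>k\<in>UNIV. (norm (U k j))\<^sup>2)"
    by (rule member_le_sum) auto
  then have "(norm (U i j))\<^sup>2 \<le> 1" using s by simp
  then show ?thesis by (simp add: power_le_one_iff)
qed

lemma haar_facts:
  assumes "compact_group_haar G T \<mu>"
  shows "finite_measure \<mu>" "measure \<mu> (space \<mu>) = 1" "space \<mu> = carrier G"
    "space \<mu> = topspace T" "sets \<mu> = sigma_sets (topspace T) {S. openin T S}"
  using assms unfolding compact_group_haar_def
  by (auto intro!: finite_measureI simp: measure_def)

lemma rep_facts:
  assumes "compact_group_haar G T \<mu>" "unitary_rep G T U"
  shows "goodW \<mu> U" "\<And>g. g \<in> space \<mu> \<Longrightarrow> mmult (adj (U g)) (U g) = idop"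
    "\<And>g. g \<in> space \<mu> \<Longrightarrow> mmult (U g) (adj (U g)) = idop"
    "\<And>i j. (\<lambda>g. U g i j) \<in> borel_measurable \<mu>"
proof -
  note h = haar_facts[OF assms(1)]
  show m: "\<And>i j. (\<lambda>g. U g i j) \<in> borel_measurable \<mu>"
    using assms(2) h(4,5) unfolding unitary_rep_def by (auto intro: cont_meas)
  show "goodW \<mu> U" unfolding goodW_def using h m assms(2)
    by (auto simp: unitary_rep_def intro: unitary_bound)
  show "\<And>g. g \<in> space \<mu> \<Longrightarrow> mmult (adj (U g)) (U g) = idop"
    "\<And>g. g \<in> space \<mu> \<Longrightarrow> mmult (U g) (adj (U g)) = idop"
    using assms(2) h(3) by (auto simp: unitary_rep_def unitary_op_def)
qed

lemma tensor_app: "tensor M N x y = M (fst x) (fst y) * N (snd x) (snd y)"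
  by (cases x, cases y) (simp add: tensor_def)

lemma goodW_tensor:
  assumes "compact_group_haar G T \<mu>" "unitary_rep G T UR" "unitary_rep G T UA"
  shows "goodW \<mu> (\<lambda>g. tensor (UR g) (UA g))"
proof -
  note h = haar_facts[OF assms(1)]
  note a = rep_facts[OF assms(1,2)] and b = rep_facts[OF assms(1,3)]
  show ?thesis unfolding goodW_def tensor_app
  proof (intro conjI h(1,2) allI ballI)
    fix i j show "(\<lambda>g. UR g (fst i) (fst j) * UA g (snd i) (snd j)) \<in> borel_measurable \<mu>"
      by (intro borel_measurable_times a(4) b(4))
  next
    fix g i j assume "g \<in> space \<mu>"
    then show "norm (UR g (fst i) (fst j) * UA g (snd i) (snd j)) \<le> 1"
      using a(1) b(1) unfolding goodW_def by (auto simp: norm_mult intro!: mult_le_one)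
  qed
qed

lemma inf_affine:
  fixes F :: "real set"
  assumes "F \<noteq> {}" "\<And>t. t \<in> F \<Longrightarrow> 0 \<le> t" "p > 0"
  shows "Inf ((\<lambda>t. p * t + q) ` F) = p * Inf F + q"
proof (rule cInf_eq_non_empty)
  have bdd: "bdd_below F" by (rule bdd_belowI[where m=0]) (rule assms(2))
  show "(\<lambda>t. p * t + q) ` F \<noteq> {}" using assms(1) by simp
  show "\<And>x. x \<in> (\<lambda>t. p * t + q) ` F \<Longrightarrow> p * Inf F + q \<le> x"
    using cInf_lower[OF _ bdd] assms(3) by auto
  fix y assume "\<And>x. x \<in> (\<lambda>t. p * t + q) ` F \<Longrightarrow> y \<le> x"
  then have "\<And>t. t \<in> F \<Longrightarrow> (y - q) / p \<le> t" using assms(3) by (auto simp: field_simps)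
  then have "(y - q) / p \<le> Inf F" by (intro cInf_greatest assms(1))
  then show "y \<le> p * Inf F + q" using assms(3) by (auto simp: field_simps)
qed

lemma psd_zero: "psd (\<lambda>x y. 0 :: complex)"
  by (simp add: psd_def)

lemma trace_lin: "trace (\<lambda>a b. x * A a b + y * B a b) = x * trace A + y * trace B"
  by (simp add: trace_def sum.distrib sum_distrib_left)

lemma real_prod_nonneg: "Im a = 0 \<Longrightarrow> Re a \<ge> 0 \<Longrightarrow> Im b = 0 \<Longrightarrow> Re b \<ge> 0 \<Longrightarrow> Im (a * b) = 0 \<and> Re (a * b) \<ge> 0"
  by simp



theorem lemma10:
  fixes G :: "('g, 'b) monoid_scheme" and T :: "'g topology" and \<mu> :: "'g measure"
    and UR :: "'g \<Rightarrow> 'r::finite op" and UA :: "'g \<Rightarrow> 'a::finite op"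
    and \<eta> :: "'r op" and \<tau> :: "'a op" and p :: real
  assumes "compact_group_haar G T \<mu>"
    and "unitary_rep G T UR" and "unitary_rep G T UA"
    and "state \<eta>" and "state \<tau>"
    and "0 \<le> p" and "p \<le> 1"
  shows "Phi \<mu> UR UA (depol p \<eta>) \<tau>
           = p * Phi \<mu> UR UA \<eta> \<tau> + (1 - p) * Phi \<mu> UR UA (maxmixed :: 'r op) \<tau>
       \<and> p * Phi \<mu> UR UA \<eta> \<tau> + (1 - p) * Phi \<mu> UR UA (maxmixed :: 'r op) \<tau>
           = p * Phi \<mu> UR UA \<eta> \<tau> + (1 - p) / real CARD('r)"
proof -
  define W where "W = (\<lambda>g. tensor (UR g) (UA g))"
  have gW: "goodW \<mu> W" unfolding W_def by (rule goodW_tensor[OF assms(1-3)])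
  note R = rep_facts[OF assms(1,2)] and A = rep_facts[OF assms(1,3)]
  define S where "S = tw \<mu> UA \<tau>"
  have psdeta: "psd \<eta>" and psdtau: "psd \<tau>" and treta: "trace \<eta> = 1" and trtau: "trace \<tau> = 1"
    using assms(4,5) by (auto simp: state_def)
  have psdS: "psd S" unfolding S_def by (rule psd_tw[OF A(1) psdtau])
  have trS: "trace S = 1" unfolding S_def using trace_tw[OF A(1) A(2)] trtau by simp
  define d where "d = real CARD('r)"
  have d0: "d > 0" unfolding d_def by simp
  have TI: "twirl \<mu> UR UA (tensor idop \<tau>) = tensor idop S"
    unfolding twirl_tw S_def by (rule tw_tensor_idop[OF R(3)])
  define T\<eta> where "T\<eta> = twirl \<mu> UR UA (tensor \<eta> \<tau>)"
  define F where "F \<eta>' = {Re (trace X) | X :: 'a op. psd X \<and>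
      psd (\<lambda>x y. tensor (idop :: 'r op) X x y - twirl \<mu> UR UA (tensor \<eta>' \<tau>) x y)}" for \<eta>'
  have PhiF: "Phi \<mu> UR UA \<eta>' \<tau> = Inf (F \<eta>')" for \<eta>' by (simp add: Phi_def F_def)

  have hermET: "tensor \<eta> \<tau> x y = cnj (tensor \<eta> \<tau> y x)" for x y
    by (simp add: tensor_app psd_herm[OF psdeta, of "fst x" "fst y"] psd_herm[OF psdtau, of "snd x" "snd y"])
  have imT: "Im (qf T\<eta> v) = 0" for v
  proof -
    have "qf T\<eta> v = integral\<^sup>L \<mu> (\<lambda>g. qf (tensor \<eta> \<tau>) (\<lambda>k. \<Sum>i\<in>UNIV. cnj (W g i k) * v i))"
      unfolding T\<eta>_def twirl_tw W_def[symmetric] by (rule qf_tw(1)[OF gW])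
    also have "Im \<dots> = 0"
      by (rule int_real_nonneg(1)[OF qf_tw(2)[OF gW]]) (rule herm_qf_real[OF hermET])
    finally show ?thesis .
  qed
  have prodT: "Im (qf T\<eta> (\<lambda>(r, a). ev r0 r * w a)) = 0 \<and> Re (qf T\<eta> (\<lambda>(r, a). ev r0 r * w a)) \<ge> 0" for r0 w
  proof -
    let ?v = "\<lambda>(r, a). ev r0 r * w a"
    have u: "(\<lambda>k. \<Sum>i\<in>UNIV. cnj (W g i k) * ?v i)
       = (\<lambda>(k, l). cnj (UR g r0 k) * (\<Sum>a\<in>UNIV. cnj (UA g a l) * w a))" for g
    proof (intro ext, clarsimp)
      fix k l
      have "(\<Sum>i\<in>UNIV. cnj (W g i (k, l)) * ?v i)
         = (\<Sum>r\<in>UNIV. \<Sum>a\<in>UNIV. cnj (UR g r k) * cnj (UA g a l) * (ev r0 r * w a))"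
        by (simp add: sum_pairs W_def tensor_app)
      also have "\<dots> = (\<Sum>r\<in>UNIV. (cnj (UR g r k) * (\<Sum>a\<in>UNIV. cnj (UA g a l) * w a)) * ev r0 r)"
        by (simp add: sum_distrib_left sum_distrib_right mult_ac)
      also have "\<dots> = cnj (UR g r0 k) * (\<Sum>a\<in>UNIV. cnj (UA g a l) * w a)"
        by (rule sum_ev_r)
      finally show "(\<Sum>i\<in>UNIV. cnj (W g i (k, l)) * ?v i) = cnj (UR g r0 k) * (\<Sum>a\<in>UNIV. cnj (UA g a l) * w a)" .
    qed
    have eq: "qf T\<eta> ?v = integral\<^sup>L \<mu> (\<lambda>g. qf (tensor \<eta> \<tau>) (\<lambda>k. \<Sum>i\<in>UNIV. cnj (W g i k) * ?v i))"
      unfolding T\<eta>_def twirl_tw W_def[symmetric] by (rule qf_tw(1)[OF gW])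
    have pw: "Im (qf (tensor \<eta> \<tau>) (\<lambda>k. \<Sum>i\<in>UNIV. cnj (W g i k) * ?v i)) = 0 \<and>
            Re (qf (tensor \<eta> \<tau>) (\<lambda>k. \<Sum>i\<in>UNIV. cnj (W g i k) * ?v i)) \<ge> 0" for g
        unfolding u qf_tensor using psdeta psdtau unfolding psd_qf by (intro real_prod_nonneg) auto
    have i1: "Im (integral\<^sup>L \<mu> (\<lambda>g. qf (tensor \<eta> \<tau>) (\<lambda>k. \<Sum>i\<in>UNIV. cnj (W g i k) * ?v i))) = 0"
      by (rule int_real_nonneg(1)[OF qf_tw(2)[OF gW]]; use pw in blast)
    have r1: "Re (integral\<^sup>L \<mu> (\<lambda>g. qf (tensor \<eta> \<tau>) (\<lambda>k. \<Sum>i\<in>UNIV. cnj (W g i k) * ?v i))) \<ge> 0"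
      by (rule int_real_nonneg(2)[OF qf_tw(2)[OF gW]]; use pw in blast)
    show ?thesis unfolding eq using i1 r1 by blast
  qed
  have Ypsd: "psd Y" if "psd (\<lambda>x y. tensor (idop :: 'r op) Y x y - T\<eta> x y)" for Y
    unfolding psd_qf
  proof
    fix w :: "'a \<Rightarrow> complex"
    define r0 :: 'r where "r0 = undefined"
    let ?v = "\<lambda>(r, a). ev r0 r * w a"
    have e1: "qf (tensor (idop :: 'r op) Y) ?v = qf Y w"
      by (simp add: qf_tensor qf_unit idop_ev) (simp add: ev_def)
    have "Im (qf (\<lambda>x y. tensor (idop :: 'r op) Y x y - T\<eta> x y) ?v) = 0 \<and>
          Re (qf (\<lambda>x y. tensor (idop :: 'r op) Y x y - T\<eta> x y) ?v) \<ge> 0"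
      using that unfolding psd_qf by blast
    then show "Im (qf Y w) = 0 \<and> 0 \<le> Re (qf Y w)"
      using prodT[of r0 w] unfolding qf_diff e1 by auto
  qed
  have Fne: "F \<eta> \<noteq> {}"
  proof -
    define B where "B = (\<Sum>k\<in>UNIV. \<Sum>l\<in>UNIV. norm (tensor \<eta> \<tau> k l))"
    define cc where "cc = B * real CARD('r \<times> 'a)"
    have B0: "B \<ge> 0" unfolding B_def by (simp add: sum_nonneg)
    define X0 :: "'a op" where "X0 = (\<lambda>a b. complex_of_real cc * idop a b)"
    have "psd X0" unfolding X0_def cc_def using B0 by (intro psd_scale psd_idop) simp
    moreover have "psd (\<lambda>x y. tensor (idop :: 'r op) X0 x y - T\<eta> x y)"
    proof -
      have "(\<lambda>x y. tensor (idop :: 'r op) X0 x y - T\<eta> x y)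
          = (\<lambda>x y. complex_of_real (B * real CARD('r \<times> 'a)) * idop x y - T\<eta> x y)"
        by (auto simp: fun_eq_iff tensor_app X0_def cc_def idop_def prod_eq_iff)
      moreover have "psd (\<lambda>x y. complex_of_real (B * real CARD('r \<times> 'a)) * idop x y - T\<eta> x y)"
        by (rule psd_shift[OF imT]) (unfold B_def T\<eta>_def twirl_tw, rule tw_bound[OF goodW_tensor[OF assms(1-3)]])
      ultimately show ?thesis by simp
    qed
    ultimately have "Re (trace X0) \<in> F \<eta>" unfolding F_def T\<eta>_def by blast
    then show ?thesis by blast
  qed
  have Fnn: "\<And>t. t \<in> F \<eta>' \<Longrightarrow> 0 \<le> t" for \<eta>' unfolding F_def using psd_trace by blast
  have Tmm: "twirl \<mu> UR UA (tensor maxmixed \<tau>) = (\<lambda>x y. complex_of_real (1 / d) * tensor idop S x y)"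
  proof -
    have eq: "tensor (maxmixed :: 'r op) \<tau> = (\<lambda>x y. complex_of_real (1 / d) * tensor idop \<tau> x y + 0 * tensor idop \<tau> x y)"
      by (auto simp: fun_eq_iff tensor_app maxmixed_def d_def)
    show ?thesis unfolding twirl_tw eq tw_lin[OF gW[unfolded W_def]] TI[unfolded twirl_tw] by simp
  qed
  have Phimm: "Phi \<mu> UR UA (maxmixed :: 'r op) \<tau> = 1 / d"
    unfolding PhiF
  proof (rule cInf_eq_minimum)
    define X1 :: "'a op" where "X1 = (\<lambda>a b. complex_of_real (1 / d) * S a b)"
    have "(\<lambda>x y. tensor (idop :: 'r op) X1 x y - twirl \<mu> UR UA (tensor maxmixed \<tau>) x y) = (\<lambda>x y. 0)"
      by (auto simp: fun_eq_iff Tmm tensor_app X1_def)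
    moreover have "psd X1" unfolding X1_def using d0 by (intro psd_scale psdS) simp
    moreover have "Re (trace X1) = 1 / d" unfolding X1_def using trace_lin[of "complex_of_real (1/d)" S 0 S] trS
      by simp
    ultimately show "1 / d \<in> F maxmixed" unfolding F_def using psd_zero by force
  next
    fix t assume "t \<in> F maxmixed"
    then obtain X :: "'a op" where X: "t = Re (trace X)" "psd X"
      "psd (\<lambda>x y. tensor (idop :: 'r op) X x y - twirl \<mu> UR UA (tensor maxmixed \<tau>) x y)"
      unfolding F_def by blast
    have "(\<lambda>x y. tensor (idop :: 'r op) X x y - twirl \<mu> UR UA (tensor maxmixed \<tau>) x y)
       = tensor (idop :: 'r op) (\<lambda>a b. X a b - complex_of_real (1 / d) * S a b)"
      by (auto simp: fun_eq_iff Tmm tensor_app algebra_simps)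
    then have "psd (\<lambda>a b. X a b - complex_of_real (1 / d) * S a b)" using X(3) psd_tensor_rev by metis
    then have "Re (trace (\<lambda>a b. 1 * X a b + (- complex_of_real (1 / d)) * S a b)) \<ge> 0"
      using psd_trace by simp
    then show "1 / d \<le> t" unfolding trace_lin X(1) using trS by simp
  qed
  show ?thesis
  proof (cases "p = 0")
    case True
    have "depol p \<eta> = maxmixed" using True by (auto simp: fun_eq_iff depol_def maxmixed_def)
    then show ?thesis using True Phimm d_def by simp
  next
    case False
    then have p0: "p > 0" using assms(6) by simp
    define c where "c = complex_of_real ((1 - p) / d)"
    have Tmix: "twirl \<mu> UR UA (tensor (depol p \<eta>) \<tau>) = (\<lambda>x y. complex_of_real p * T\<eta> x y + c * tensor idop S x y)"
    proof -
      have eq: "tensor (depol p \<eta>) \<tau> = (\<lambda>x y. complex_of_real p * tensor \<eta> \<tau> x y + c * tensor idop \<tau> x y)"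
        by (auto simp: fun_eq_iff tensor_app depol_def c_def d_def algebra_simps)
      show ?thesis unfolding T\<eta>_def twirl_tw eq tw_lin[OF gW[unfolded W_def]] TI[unfolded twirl_tw] by simp
    qed
    have rel: "(\<lambda>x y. tensor (idop :: 'r op) (\<lambda>a b. complex_of_real p * Y a b + c * S a b) x y
                  - twirl \<mu> UR UA (tensor (depol p \<eta>) \<tau>) x y)
             = (\<lambda>x y. complex_of_real p * (tensor (idop :: 'r op) Y x y - T\<eta> x y))"
      and trrel: "Re (trace (\<lambda>a b. complex_of_real p * Y a b + c * S a b)) = p * Re (trace Y) + (1 - p) / d"
      for Y :: "'a op"
    proof -
      show "(\<lambda>x y. tensor (idop :: 'r op) (\<lambda>a b. complex_of_real p * Y a b + c * S a b) x y
                  - twirl \<mu> UR UA (tensor (depol p \<eta>) \<tau>) x y)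
             = (\<lambda>x y. complex_of_real p * (tensor (idop :: 'r op) Y x y - T\<eta> x y))"
        by (auto simp: fun_eq_iff Tmix tensor_app algebra_simps)
      show "Re (trace (\<lambda>a b. complex_of_real p * Y a b + c * S a b)) = p * Re (trace Y) + (1 - p) / d"
        unfolding trace_lin trS c_def by simp
    qed
    have Fmix: "F (depol p \<eta>) = (\<lambda>t. p * t + (1 - p) / d) ` F \<eta>"
    proof
      show "F (depol p \<eta>) \<subseteq> (\<lambda>t. p * t + (1 - p) / d) ` F \<eta>"
      proof
        fix t assume "t \<in> F (depol p \<eta>)"
        then obtain X :: "'a op" where X: "t = Re (trace X)" "psd X"
          "psd (\<lambda>x y. tensor (idop :: 'r op) X x y - twirl \<mu> UR UA (tensor (depol p \<eta>) \<tau>) x y)"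
          unfolding F_def by blast
        define Y where "Y = (\<lambda>a b. complex_of_real (1 / p) * (X a b - c * S a b))"
        have XY: "X = (\<lambda>a b. complex_of_real p * Y a b + c * S a b)"
          using p0 by (auto simp: fun_eq_iff Y_def field_simps)
        have "psd (\<lambda>x y. complex_of_real (1 / p) * (complex_of_real p * (tensor (idop :: 'r op) Y x y - T\<eta> x y)))"
        proof (rule psd_scale)
          show "psd (\<lambda>x y. complex_of_real p * (tensor (idop :: 'r op) Y x y - T\<eta> x y))"
            using X(3) unfolding XY rel .
        qed (use p0 in simp)
        then have pY: "psd (\<lambda>x y. tensor (idop :: 'r op) Y x y - T\<eta> x y)"
        proof -
          have e: "\<And>z. complex_of_real (1 / p) * (complex_of_real p * z) = z"
            using p0 by (simp add: mult.assoc[symmetric] of_real_mult[symmetric])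
          from \<open>psd (\<lambda>x y. complex_of_real (1 / p) * (complex_of_real p * (tensor (idop :: 'r op) Y x y - T\<eta> x y)))\<close>
          show ?thesis by (simp only: e)
        qed
        have "Re (trace Y) \<in> F \<eta>" unfolding F_def T\<eta>_def using Ypsd[OF pY] pY unfolding T\<eta>_def by blast
        moreover have "t = p * Re (trace Y) + (1 - p) / d" using X(1) unfolding XY trrel .
        ultimately show "t \<in> (\<lambda>t. p * t + (1 - p) / d) ` F \<eta>" by blast
      qed
      show "(\<lambda>t. p * t + (1 - p) / d) ` F \<eta> \<subseteq> F (depol p \<eta>)"
      proof
        fix t assume "t \<in> (\<lambda>t. p * t + (1 - p) / d) ` F \<eta>"
        then obtain Y :: "'a op" where Y: "t = p * Re (trace Y) + (1 - p) / d" "psd Y"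
          "psd (\<lambda>x y. tensor (idop :: 'r op) Y x y - T\<eta> x y)"
          unfolding F_def T\<eta>_def by blast
        define X where "X = (\<lambda>a b. complex_of_real p * Y a b + c * S a b)"
        have "psd X" unfolding X_def c_def using p0 assms(7) d0
          by (intro psd_add psd_scale Y(2) psdS) auto
        moreover have "psd (\<lambda>x y. tensor (idop :: 'r op) X x y - twirl \<mu> UR UA (tensor (depol p \<eta>) \<tau>) x y)"
          unfolding X_def rel using p0 by (intro psd_scale Y(3)) auto
        moreover have "t = Re (trace X)" unfolding X_def trrel Y(1) ..
        ultimately show "t \<in> F (depol p \<eta>)" unfolding F_def by blast
      qed
    qed
    have "Phi \<mu> UR UA (depol p \<eta>) \<tau> = p * Phi \<mu> UR UA \<eta> \<tau> + (1 - p) / d"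
      unfolding PhiF Fmix by (rule inf_affine[OF Fne Fnn p0])
    then show ?thesis using Phimm d_def by simp
  qed
qed


end
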